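(* Let $q$ be an odd prime power, $\lambda$ a divisor of $q+1$ with $2\le\lambda<q+1$, $m=2t+1\ge5$, and $n=\frac{q^m+1}{\lambda}$. For integers $a,b,c$ let $f(a,b,c)=\frac{q^{t+1}+1}{\lambda}+a\frac{q^t-1}{\lambda}+bq^t+c$ and $g(a,b,c)=\frac{q^{t+1}-1}{\lambda}+a\frac{q^t+1}{\lambda}+bq^t+c$. If $t$ is even, let $T_1=\{f(0,0,c):c\in\mathbb{Z},-\frac q\lambda\le c\le\frac{q-2}{\lambda}\}$, $T_2=\{f(0,b,0):b\in\mathbb{Z},1\le b\le\frac{q-1}{\lambda}\}$, $T_3=\{f(2,b,0):b\in\mathbb{Z},0\le b\le\frac{q-3}{\lambda}\}$. If $t$ is odd, let $T_1=\{g(0,0,c):c\in\mathbb{Z},-\frac{q-2}{\lambda}\le c\le\frac q\lambda\}$, $T_2=\{g(0,b,0):b\in\mathbb{Z},1\le b\le\frac{q-1}{\lambda}\}$, $T_3=\{g(2,b,0):b\in\mathbb{Z},0\le b\le\frac{q-3}{\lambda}\}$. Then: (1) every integer $i$ with $1\le i<\frac{2q^{t+1}-2q+1}{\lambda}$, $i\not\equiv0\pmod q$ and $i\notin T_1\cup T_2\cup T_3$ is a coset leader modulo $n$ with $|C_i|=2m$, while no element of $T_1\cup T_2\cup T_3$ (with $i\not\equiv 0\pmod q$) is a coset leader modulo $n$; (2) no integer $i$ with $\frac{2q^{t+1}-2q+1}{\lambda}\le i\le\frac{2q^{t+1}+2q-1}{\lambda}$ is a coset leader modulo $n$.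
   Context: For $0\le s\le n-1$, $C_s=\{sq^i\bmod n:i\ge0\}$ is the $q$-cyclotomic coset of $s$ modulo $n$; its least element is its coset leader. *)

theory Defs
  imports "HOL-Computational_Algebra.Primes" Complex_Main
begin

definition cyc_coset :: "nat \<Rightarrow> nat \<Rightarrow> nat \<Rightarrow> nat set" where
  "cyc_coset q n s = {s * q ^ i mod n | i. True}"

definition coset_leader :: "nat \<Rightarrow> nat \<Rightarrow> nat \<Rightarrow> bool" where
  "coset_leader q n s \<longleftrightarrow> s < n \<and> s = Min (cyc_coset q n s)"

definition prime_power :: "nat \<Rightarrow> bool" where
  "prime_power q \<longleftrightarrow> (\<exists>p k. prime p \<and> k \<ge> 1 \<and> q = p ^ k)"

definition ffun :: "nat \<Rightarrow> nat \<Rightarrow> nat \<Rightarrow> int \<Rightarrow> int \<Rightarrow> int \<Rightarrow> int" where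
  "ffun q l t a b c = (int q ^ (t+1) + 1) div int l + a * ((int q ^ t - 1) div int l)
      + b * int q ^ t + c"

definition gfun :: "nat \<Rightarrow> nat \<Rightarrow> nat \<Rightarrow> int \<Rightarrow> int \<Rightarrow> int \<Rightarrow> int" where
  "gfun q l t a b c = (int q ^ (t+1) - 1) div int l + a * ((int q ^ t + 1) div int l)
      + b * int q ^ t + c"

definition Tset :: "nat \<Rightarrow> nat \<Rightarrow> nat \<Rightarrow> int set" where
  "Tset q l t = (if even t then
     {ffun q l t 0 0 c | c. - (real q / real l) \<le> real_of_int c \<and> real_of_int c \<le> (real q - 2) / real l}
     \<union> {ffun q l t 0 b 0 | b. 1 \<le> real_of_int b \<and> real_of_int b \<le> (real q - 1) / real l}
     \<union> {ffun q l t 2 b 0 | b. 0 \<le> real_of_int b \<and> real_of_int b \<le> (real q - 3) / real l}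
   else
     {gfun q l t 0 0 c | c. - ((real q - 2) / real l) \<le> real_of_int c \<and> real_of_int c \<le> real q / real l}
     \<union> {gfun q l t 0 b 0 | b. 1 \<le> real_of_int b \<and> real_of_int b \<le> (real q - 1) / real l}
     \<union> {gfun q l t 2 b 0 | b. 0 \<le> real_of_int b \<and> real_of_int b \<le> (real q - 3) / real l})"

end

theory Submission
  imports Defs
begin


lemma modlem: fixes a c v :: nat assumes "v < c" shows "(a*c+v) mod c = v"
  using assms by simp

lemma orbit_val:
  fixes s Q R :: nat
  assumes "Q > 0" "s mod Q \<ge> 1" "s < Q*R"
  shows "(s*R) mod (Q*R+1) = (s mod Q)*R - s div Q"
    and "(s*R*(Q*R)) mod (Q*R+1) = Q*R+1 - ((s mod Q)*R - s div Q)"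
    and "s div Q < (s mod Q)*R"
proof -
  define A where "A = s div Q"
  define B where "B = s mod Q"
  have s: "s = A*Q + B" by (simp add: A_def B_def)
  have BQ: "B < Q" using assms by (simp add: B_def)
  have AR: "A < R"
  proof -
    have "A*Q < Q*R" using assms(3) s by linarith
    then show ?thesis by (metis mult.commute mult_less_cancel2)
  qed
  have B1: "B \<ge> 1" using assms(2) B_def by simp
  have "R \<le> B*R" using B1 by simp
  then have ABR: "A < B*R" using AR by linarith
  define V where "V = B*R - A"
  have "B*R < Q*R" using BQ AR by simp
  then have VQR: "V < Q*R+1" unfolding V_def by linarith
  have e1: "s*R = A*(Q*R+1) + V" using ABR unfolding V_def s by (simp add: algebra_simps)
  have "(s*R) mod (Q*R+1) = V" unfolding e1 by (rule modlem[OF VQR])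
  then show "(s*R) mod (Q*R+1) = (s mod Q)*R - s div Q"
    by (simp add: V_def A_def B_def)
  have V1: "V \<ge> 1" using ABR V_def by simp
  obtain W where W: "V = W + 1" using V1 by (metis le_add_diff_inverse2)
  have WQR: "W < Q*R" using VQR W by simp
  have "Q*R+1 - V = Q*R - W" using W by simp
  have e2: "s*R*(Q*R) = (A*(Q*R) + W)*(Q*R+1) + (Q*R - W)"
  proof -
    have "s*R*(Q*R) = (A*(Q*R+1) + W + 1)*(Q*R)" using e1 W by simp
    also have "\<dots> = (A*(Q*R) + W)*(Q*R+1) + (Q*R - W)"
      using WQR by (simp add: algebra_simps)
    finally show ?thesis .
  qed
  have "Q*R - W < Q*R+1" by simp
  then have "(s*R*(Q*R)) mod (Q*R+1) = Q*R - W" unfolding e2 by (rule modlem)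
  then show "(s*R*(Q*R)) mod (Q*R+1) = Q*R+1 - ((s mod Q)*R - s div Q)"
    using W by (simp add: V_def A_def B_def)
  show "s div Q < (s mod Q)*R" using ABR A_def B_def by simp
qed


lemma q3facts: fixes q :: nat assumes "q \<ge> 3" shows "2*(q+1) < q*q" "2*q < q*q" "3*q \<le> q*q"
proof -
  have "3*q \<le> q*q" using assms by (simp add: mult_le_mono1)
  then have "2*q+2 < q*q" using assms by linarith
  then show "2*(q+1) < q*q" by simp
  show "2*q < q*q" using \<open>3*q \<le> q*q\<close> assms by linarith
  show "3*q \<le> q*q" by fact
qed

lemma case_low:
  fixes q P Q R s A B :: nat
  assumes q3: "q \<ge> 3" and P1: "P \<ge> 1" and Qq: "Q \<ge> q" and Rq: "R \<ge> q*q*P" and QR: "Q*R = q*P*P"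
    and sb: "s \<le> 2*q*P" and sAB: "s = A*Q + B" and BQ: "B < Q" and B1: "B \<ge> 1"
  shows "s + A < B*R" "B*R + s < Q*R + 1 + A"
proof -
  have qP: "q*P > 0" using q3 P1 by simp
  have "A*q \<le> A*Q" using Qq by simp
  then have Aq: "A*q \<le> s" using sAB by linarith
  have "q*(s+A) \<le> (q+1)*s" using Aq by (simp add: algebra_simps)
  also have "\<dots> \<le> (q+1)*(2*q*P)" by (rule mult_le_mono2[OF sb])
  also have "\<dots> = (2*(q+1))*(q*P)" by (simp add: algebra_simps)
  also have "\<dots> < (q*q)*(q*P)" by (rule mult_strict_right_mono[OF q3facts(1)[OF q3] qP])
  also have "\<dots> = q*(q*q*P)" by (simp add: algebra_simps)
  finally have "s + A < q*q*P" by simp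
  moreover have "R \<le> B*R" using B1 by simp
  ultimately show "s + A < B*R" using Rq by linarith
  have "B+1 \<le> Q" using BQ by simp
  then have "(B+1)*R \<le> Q*R" by (rule mult_le_mono1)
  moreover have "2*q*P < q*q*P" using q3facts(2)[OF q3] P1 by simp
  moreover have "(B+1)*R = B*R + R" by simp
  ultimately show "B*R + s < Q*R + 1 + A" using sb Rq by linarith
qed

lemma case_high:
  fixes q P Q R s :: nat
  assumes q3: "q \<ge> 3" and Pq: "P \<ge> q*q" and Qq: "Q \<ge> q*q*P" and Rq: "R \<ge> q" and RP: "R*q \<le> P"
    and QR: "Q*R = q*P*P" and sb: "s \<le> 2*q*P" and s1: "s \<ge> 1"
  shows "s div Q = 0" "s mod Q = s" "s < s*R" "s*R + s < Q*R + 1"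
proof -
  have qP: "q*P > 0" using q3 Pq by (metis less_le_trans mult_pos_pos nat_le_linear not_le zero_less_numeral)
  have "2*q*P < q*q*P" using q3facts(2)[OF q3] qP by simp
  then have sQ: "s < Q" using sb Qq by linarith
  then show "s div Q = 0" "s mod Q = s" by simp_all
  have "s*1 < s*R" using s1 Rq q3 by (intro mult_strict_left_mono) auto
  then show "s < s*R" by simp
  have "q*(s*R + s) = s*(R*q) + s*q" by (simp add: algebra_simps)
  also have "\<dots> \<le> s*P + s*q" using RP by simp
  also have "\<dots> = s*(P+q)" by (simp add: algebra_simps)
  also have "\<dots> \<le> (2*q*P)*(P+q)" using sb by simp
  also have "\<dots> = (q*P)*(2*(P+q))" by (simp add: algebra_simps)
  also have "\<dots> < (q*P)*(q*P)"
  proof -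
    have "3*q \<le> q*q" using q3facts(3)[OF q3] .
    have "3*P \<le> q*P" using q3 by (simp add: mult_le_mono1)
    moreover have "2*q < P" using Pq q3facts(2)[OF q3] by linarith
    moreover have "2*(P+q) = 2*P+2*q" by simp
    ultimately have "2*(P+q) < q*P" by linarith
    then show ?thesis using qP by simp
  qed
  also have "\<dots> = q*(Q*R)" using QR by (simp add: algebra_simps)
  finally show "s*R + s < Q*R + 1" by simp
qed


lemma case_t:
  fixes q P s A B :: nat
  assumes q3: "q \<ge> 3" and Pq: "P \<ge> q*q" and sAB: "s = A*P + B" and BP: "B < P" and B1: "B \<ge> 1"
    and sb: "s + 2*q \<le> 2*q*P" and n1: "\<not>(B=1 \<and> A \<ge> q)" and n2: "\<not>(B+1 = P \<and> A \<ge> q)"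
  shows "s + A < B*(q*P)" "B*(q*P) + s < P*(q*P) + 1 + A"
proof -
  have qq: "q < q*q" using q3facts(2)[OF q3] by linarith
  have "A*P \<le> s" using sAB by simp
  moreover have "2*q*P = (2*q)*P" by simp
  ultimately have "A*P < (2*q)*P" using sb q3 by linarith
  then have A2q: "A < 2*q" by simp
  have sqP: "s < 2*(q*P)" using sb q3 \<open>2*q*P = (2*q)*P\<close> by linarith
  show "s + A < B*(q*P)"
  proof (cases "B \<ge> 2")
    case True
    then have "2*(q*P) \<le> B*(q*P)" by (rule mult_le_mono1)
    then show ?thesis using sb A2q by linarith
  next
    case False
    then have b: "B = 1" using B1 by simp
    then have "A + 1 \<le> q" using n1 by simp
    then have "(A+1)*P \<le> q*P" by (rule mult_le_mono1)
    moreover have "A + 1 < P" using \<open>A + 1 \<le> q\<close> qq Pq by linarith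
    moreover have "(A+1)*P = A*P + P" by simp
    ultimately show ?thesis using sAB b by simp
  qed
  show "B*(q*P) + s < P*(q*P) + 1 + A"
  proof (cases "B + 2 \<le> P")
    case True
    then have "(B+2)*(q*P) \<le> P*(q*P)" by (rule mult_le_mono1)
    moreover have "(B+2)*(q*P) = B*(q*P) + 2*(q*P)" by (simp add: algebra_simps)
    ultimately show ?thesis using sqP by linarith
  next
    case False
    then have b: "B + 1 = P" using BP by simp
    then have "A + 1 \<le> q" using n2 by simp
    then have "(A+1)*P \<le> q*P" by (rule mult_le_mono1)
    moreover have "(A+1)*P = A*P + P" by simp
    moreover have "(B+1)*(q*P) = B*(q*P) + q*P" by simp
    ultimately show ?thesis using sAB b BP by (metis add_less_mono1 add_lessD1 less_le_trans nat_add_left_cancel_less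
        trans_less_add1)
  qed
qed

lemma case_t1:
  fixes q P s A B :: nat
  assumes q3: "q \<ge> 3" and Pq: "P \<ge> q*q" and sAB: "s = A*(q*P) + B" and BP: "B < q*P" and B1: "B \<ge> 1"
    and sb: "s + 2*q \<le> 2*q*P" and n3: "\<not>(A=1 \<and> B \<le> q)" and n4: "\<not>(A=0 \<and> q*P < s + q)"
  shows "s + A < B*P" "B*P + s < (q*P)*P + 1 + A"
proof -
  have qq: "q < q*q" using q3facts(2)[OF q3] by linarith
  have "A*(q*P) \<le> s" using sAB by simp
  moreover have "2*q*P = 2*(q*P)" by simp
  ultimately have "A*(q*P) < 2*(q*P)" using sb q3 by linarith
  then have A2: "A < 2" by simp
  have "A = 0 \<or> A = 1" using A2 by linarith
  then have "s + A < B*P \<and> B*P + s < (q*P)*P + 1 + A"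
  proof
      assume a: "A = 0"
      then have sB: "s = B" using sAB by simp
      have "B*1 < B*P" using B1 Pq qq q3 by (intro mult_strict_left_mono) linarith+
      then have g1: "s + A < B*P" using a sB by simp
      have "s + q \<le> q*P" using a n4 by simp
      then have "(s+q)*P \<le> (q*P)*P" by (rule mult_le_mono1)
      moreover have "(s+q)*P = s*P + q*P" by (simp add: algebra_simps)
      ultimately have ff: "s*P + s < (q*P)*P + 1" using sB BP by linarith
      then show ?thesis using g1 ff sB a by simp
    next
      assume a: "A = 1"
      then have sB: "s = q*P + B" using sAB by simp
      have Bq: "q + 1 \<le> B" using a n3 by simp
      define P1 where "P1 = P - 1"
      have "P \<ge> 1" using Pq qq by linarith
      then have P1: "P = P1 + 1" using P1_def by simp
      have "q + 1 < P1" using P1 Pq q3facts(1)[OF q3] by simp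
      have "(q+1)*P1 \<le> B*P1" using Bq by (rule mult_le_mono1)
      moreover have "B*P = B*P1 + B" using P1 by simp
      moreover have "q*P = q*P1 + q" using P1 by simp
      moreover have "(q+1)*P1 = q*P1 + P1" by simp
      ultimately have g1: "s + A < B*P" using sB a \<open>q + 1 < P1\<close> by linarith
      have "B + 2*q \<le> q*P" using sb sB by (simp add: mult.commute)
      then have "(B + 2*q)*P \<le> (q*P)*P" by (rule mult_le_mono1)
      moreover have "(B + 2*q)*P = B*P + 2*(q*P)" by (simp add: algebra_simps)
      ultimately have "B*P + s < (q*P)*P + 1 + A" using sB BP by linarith
      then show ?thesis using g1 by simp
  qed
  then show "s + A < B*P" "B*P + s < (q*P)*P + 1 + A" by auto
qed


definition Fs :: "nat \<Rightarrow> nat \<Rightarrow> nat \<Rightarrow> bool" where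
 "Fs q P s \<longleftrightarrow> (\<exists>d. 1 \<le> d \<and> d < q \<and> s + d = q*P) \<or> (\<exists>d. 1 \<le> d \<and> d \<le> q \<and> s = q*P + d)
    \<or> (\<exists>a. a < q \<and> s = q*P + a*P + 1) \<or> (\<exists>a. 1 \<le> a \<and> a < q \<and> s + 1 = q*P + a*P)"

lemma neg_val: fixes s M :: nat assumes "1 \<le> s" "s \<le> M" shows "(s*M) mod (M+1) = M+1-s"
proof -
  obtain s' where s': "s = s' + 1" using assms(1) by (metis add.commute le_Suc_ex)
  have "s*M = s'*(M+1) + (M+1-s)" using s' assms(2) by (simp add: algebra_simps)
  moreover have "M+1-s < M+1" using assms by simp
  ultimately show ?thesis by (simp only: modlem)
qed

lemma pow_QR: "k \<le> 2*t \<Longrightarrow> (q::nat)^k * q^(2*t+1-k) = q*q^t*q^t"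
proof -
  assume "k \<le> 2*t"
  then have e: "k + (2*t+1-k) = Suc (t + t)" by simp
  have "q^k * q^(2*t+1-k) = q^(k + (2*t+1-k))" by (simp only: power_add)
  also have "\<dots> = q * (q^t * q^t)" by (simp only: e power_Suc power_add)
  finally show ?thesis by (simp only: mult.assoc)
qed

lemma pow_t2: "(q::nat)^(t+2) = q*q*q^t" by (simp add: power_add power2_eq_square)

lemma good_k:
  fixes q t s k :: nat
  assumes q3: "q \<ge> 3" and t2: "t \<ge> 2" and s1: "s \<ge> 1" and sb: "s + 2*q \<le> 2*q*q^t"
    and nd: "\<not> q dvd s" and nF: "\<not> Fs q (q^t) s" and k1: "1 \<le> k" and k2: "k \<le> 2*t"
  shows "s mod q^k \<ge> 1"
    "s + s div q^k < (s mod q^k)*q^(2*t+1-k)"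
    "(s mod q^k)*q^(2*t+1-k) + s < q^k*q^(2*t+1-k) + 1 + s div q^k"
proof -
  define P where "P = q^t"
  define Q where "Q = q^k"
  define R where "R = q^(2*t+1-k)"
  define A where "A = s div Q"
  define B where "B = s mod Q"
  have q1: "q \<ge> 1" using q3 by simp
  have sAB: "s = A*Q + B" by (simp add: A_def B_def)
  have Q0: "Q > 0" using q3 Q_def by simp
  have BQ: "B < Q" using Q0 B_def by simp
  have "q dvd Q" using k1 Q_def by (simp add: dvd_power)
  then have B1: "B \<ge> 1" using nd B_def
    by (metis dvd_mod_imp_dvd dvd_0_right less_one not_le)
  show "s mod q^k \<ge> 1" using B1 B_def Q_def by simp
  have Pqq: "P \<ge> q*q"
  proof -
    have "q^2 \<le> q^t" using t2 q1 by (simp add: power_increasing)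
    then show ?thesis by (simp add: P_def power2_eq_square)
  qed
  have QR: "Q*R = q*P*P" unfolding Q_def R_def P_def using k2 by (rule pow_QR)
  have sb2: "s \<le> 2*q*P" using sb P_def by simp
  have sb3: "s + 2*q \<le> 2*q*P" using sb P_def by simp
  have sb4: "s < (2*q)*P" using sb3 q3 by simp
  have "s + s div Q < B*R \<and> B*R + s < Q*R + 1 + s div Q"
  proof -
    consider "k < t" | "k = t" | "k = t+1" | "k > t+1" by linarith
    then show ?thesis
    proof cases
      case 1
      have "q^1 \<le> q^k" using k1 q1 by (rule power_increasing[OF _ ])
      then have Qq: "Q \<ge> q" by (simp add: Q_def)
      have "q^(t+2) \<le> q^(2*t+1-k)" using 1 q1 by (intro power_increasing) auto
      then have Rq: "R \<ge> q*q*P" by (simp only: R_def P_def pow_t2)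
      have P1: "P \<ge> 1" using P_def q3 by simp
      show ?thesis using case_low[OF q3 P1 Qq Rq QR sb2 sAB BQ B1] A_def by simp
    next
      case 2
      then have e: "2*t+1-k = Suc t" by simp
      have QP: "Q = P" using 2 P_def Q_def by simp
      have RP: "R = q*P" unfolding R_def P_def e by (simp only: power_Suc)
      have n1: "\<not>(B=1 \<and> A \<ge> q)"
      proof
        assume h: "B=1 \<and> A \<ge> q"
        have "A*P \<le> s" using sAB QP by simp
        also have "s < (2*q)*P" by (rule sb4)
        finally have "A < 2*q" using mult_less_cancel2 by blast
        define a where "a = A - q"
        have Aa: "A = q + a" using h a_def by simp
        have "s = (q+a)*P + 1" using h sAB QP Aa by simp
        then have "s = q*P + a*P + 1" by (simp only: add_mult_distrib)
        moreover have "a < q" using Aa \<open>A < 2*q\<close> by linarith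
        ultimately show False using nF unfolding Fs_def P_def by blast
      qed
      have n2: "\<not>(B+1 = P \<and> A \<ge> q)"
      proof
        assume h: "B+1 = P \<and> A \<ge> q"
        have e: "s + 1 = (A+1)*P" using sAB QP h by simp
        have "(A+1)*P < (2*q)*P" using e sb3 q3 by linarith
        then have "A + 1 < 2*q" using mult_less_cancel2 by blast
        define a where "a = A + 1 - q"
        have Aa: "A + 1 = q + a" using h a_def by simp
        have "s + 1 = (q+a)*P" using e Aa by (simp only:)
        then have "s + 1 = q*P + a*P" by (simp only: add_mult_distrib)
        moreover have "a < q" "1 \<le> a" using Aa \<open>A + 1 < 2*q\<close> h by linarith+
        ultimately show False using nF unfolding Fs_def P_def by blast
      qed
      have sAB': "s = A*P + B" using sAB QP by simp
      have sbb: "s + 2*q \<le> 2*q*P" using sb P_def by simp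
      show ?thesis using case_t[OF q3 Pqq sAB' _ B1 sbb n1 n2] BQ QP RP A_def by simp
    next
      case 3
      then have e: "2*t+1-k = t" by simp
      have QP: "Q = q*P" using 3 P_def Q_def by simp
      have RP: "R = P" unfolding R_def P_def e by (simp only:)
      have sAB': "s = A*(q*P) + B" using sAB QP by simp
      have sbb: "s + 2*q \<le> 2*q*P" using sb P_def by simp
      have n3: "\<not>(A=1 \<and> B \<le> q)"
      proof
        assume h: "A=1 \<and> B \<le> q"
        then have "s = q*P + B" using sAB' by simp
        then show False using nF B1 h unfolding Fs_def P_def by blast
      qed
      have n4: "\<not>(A=0 \<and> q*P < s + q)"
      proof
        assume h: "A=0 \<and> q*P < s + q"
        then have "s = B" using sAB' by simp
        then have "s + (q*P - s) = q*P \<and> 1 \<le> q*P - s \<and> q*P - s < q" using h BQ QP by linarith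
        then show False using nF unfolding Fs_def P_def by blast
      qed
      show ?thesis using case_t1[OF q3 Pqq sAB' _ B1 sbb n3 n4] BQ QP RP A_def by simp
    next
      case 4
      have "q^(t+2) \<le> q^k" using 4 q1 by (intro power_increasing) auto
      then have Qq: "Q \<ge> q*q*P" by (simp only: Q_def P_def pow_t2)
      have "q^1 \<le> q^(2*t+1-k)" using k2 q1 by (intro power_increasing) auto
      then have Rq: "R \<ge> q" by (simp add: R_def)
      have e: "2*t+2-k = Suc (2*t+1-k)" using 4 k2 by simp
      have "q^(2*t+2-k) \<le> q^t" using 4 q1 k2 by (intro power_increasing) auto
      then have RqP: "R*q \<le> P" unfolding R_def P_def e by (simp only: power_Suc2)
      note h = case_high[OF q3 Pqq Qq Rq RqP QR sb2 s1]
      show ?thesis using h B_def by simp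
    qed
  qed
  then show "s + s div q^k < (s mod q^k)*q^(2*t+1-k)"
    "(s mod q^k)*q^(2*t+1-k) + s < q^k*q^(2*t+1-k) + 1 + s div q^k"
    unfolding Q_def R_def B_def by auto
qed


definition FsI :: "int \<Rightarrow> int \<Rightarrow> int \<Rightarrow> bool" where
 "FsI Q P S \<longleftrightarrow> (\<exists>d. 1 \<le> d \<and> d < Q \<and> S + d = Q*P) \<or> (\<exists>d. 1 \<le> d \<and> d \<le> Q \<and> S = Q*P + d)
    \<or> (\<exists>a. 0 \<le> a \<and> a < Q \<and> S = Q*P + a*P + 1) \<or> (\<exists>a. 1 \<le> a \<and> a < Q \<and> S + 1 = Q*P + a*P)"

lemma ex_nat_int: "(\<exists>d::nat. P (int d)) \<longleftrightarrow> (\<exists>d::int. 0 \<le> d \<and> P d)"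
  by (metis nonneg_int_cases of_nat_0_le_iff)

lemma Fs_FsI: "Fs q P s \<longleftrightarrow> FsI (int q) (int P) (int s)"
proof -
  have 1: "(\<exists>d::nat. 1 \<le> d \<and> d < q \<and> s + d = q*P) \<longleftrightarrow> (\<exists>d::int. 1 \<le> d \<and> d < int q \<and> int s + d = int q*int P)"
  proof -
    have "(\<exists>d::nat. 1 \<le> d \<and> d < q \<and> s + d = q*P) \<longleftrightarrow> (\<exists>d::nat. 1 \<le> int d \<and> int d < int q \<and> int s + int d = int q*int P)"
      by (simp flip: of_nat_add of_nat_mult)
    also have "\<dots> \<longleftrightarrow> (\<exists>d::int. 0 \<le> d \<and> 1 \<le> d \<and> d < int q \<and> int s + d = int q*int P)"
      by (rule ex_nat_int)
    finally show ?thesis by auto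
  qed
  have 2: "(\<exists>d::nat. 1 \<le> d \<and> d \<le> q \<and> s = q*P + d) \<longleftrightarrow> (\<exists>d::int. 1 \<le> d \<and> d \<le> int q \<and> int s = int q*int P + d)"
  proof -
    have "(\<exists>d::nat. 1 \<le> d \<and> d \<le> q \<and> s = q*P + d) \<longleftrightarrow> (\<exists>d::nat. 1 \<le> int d \<and> int d \<le> int q \<and> int s = int q*int P + int d)"
      by (simp flip: of_nat_add of_nat_mult)
    also have "\<dots> \<longleftrightarrow> (\<exists>d::int. 0 \<le> d \<and> 1 \<le> d \<and> d \<le> int q \<and> int s = int q*int P + d)"
      by (rule ex_nat_int)
    finally show ?thesis by auto
  qed
  have 3: "(\<exists>a::nat. a < q \<and> s = q*P + a*P + 1) \<longleftrightarrow> (\<exists>a::int. 0 \<le> a \<and> a < int q \<and> int s = int q*int P + a*int P + 1)"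
  proof
    assume "\<exists>a::nat. a < q \<and> s = q*P + a*P + 1"
    then obtain a where "a < q" "s = q*P + a*P + 1" by blast
    then show "\<exists>a::int. 0 \<le> a \<and> a < int q \<and> int s = int q*int P + a*int P + 1"
      by (intro exI[of _ "int a"]) simp
  next
    assume "\<exists>a::int. 0 \<le> a \<and> a < int q \<and> int s = int q*int P + a*int P + 1"
    then obtain a where h: "0 \<le> a" "a < int q" "int s = int q*int P + a*int P + 1" by blast
    define b where "b = nat a"
    have ab: "a = int b" using h(1) b_def by simp
    have "int s = int (q*P + b*P + 1)" using h(3) ab by simp
    then have "s = q*P + b*P + 1" by (simp only: of_nat_eq_iff)
    moreover have "b < q" using h(2) ab by simp
    ultimately show "\<exists>a::nat. a < q \<and> s = q*P + a*P + 1" by blast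
  qed
  have 4: "(\<exists>a::nat. 1 \<le> a \<and> a < q \<and> s + 1 = q*P + a*P) \<longleftrightarrow> (\<exists>a::int. 1 \<le> a \<and> a < int q \<and> int s + 1 = int q*int P + a*int P)"
  proof
    assume "\<exists>a::nat. 1 \<le> a \<and> a < q \<and> s + 1 = q*P + a*P"
    then obtain a where "1 \<le> a" "a < q" "s + 1 = q*P + a*P" by blast
    then show "\<exists>a::int. 1 \<le> a \<and> a < int q \<and> int s + 1 = int q*int P + a*int P"
      by (intro exI[of _ "int a"]) (simp flip: of_nat_add of_nat_mult)
  next
    assume "\<exists>a::int. 1 \<le> a \<and> a < int q \<and> int s + 1 = int q*int P + a*int P"
    then obtain a where h: "1 \<le> a" "a < int q" "int s + 1 = int q*int P + a*int P" by blast
    define b where "b = nat a"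
    have ab: "a = int b" using h(1) b_def by simp
    have "int (s + 1) = int (q*P + b*P)" using h(3) ab by simp
    then have "s + 1 = q*P + b*P" by (simp only: of_nat_eq_iff)
    moreover have "b < q" "1 \<le> b" using h(1,2) ab by simp_all
    ultimately show "\<exists>a::nat. 1 \<le> a \<and> a < q \<and> s + 1 = q*P + a*P" by blast
  qed
  show ?thesis unfolding Fs_def FsI_def using 1 2 3 4 by simp
qed


lemma Lb:
  fixes L b :: int assumes L2: "L \<ge> 2"
  shows "L*b \<ge> 1 \<Longrightarrow> b \<ge> 1" "L*b \<ge> 0 \<Longrightarrow> b \<ge> 0" "L*b \<noteq> 1" "L*b \<noteq> -1"
proof -
  have p: "b \<ge> 1 \<Longrightarrow> L*b \<ge> 2"
  proof -
    assume "b \<ge> 1" then have "L*1 \<le> L*b" using L2 by (intro mult_left_mono) auto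
    then show "L*b \<ge> 2" using L2 by linarith
  qed
  have n: "b \<le> -1 \<Longrightarrow> L*b \<le> -2"
  proof -
    assume "b \<le> -1" then have "L*b \<le> L*(-1)" using L2 by (intro mult_left_mono) auto
    then show "L*b \<le> -2" using L2 by linarith
  qed
  have "b \<ge> 1 \<or> b = 0 \<or> b \<le> -1" by linarith
  then show "L*b \<ge> 1 \<Longrightarrow> b \<ge> 1" "L*b \<ge> 0 \<Longrightarrow> b \<ge> 0" "L*b \<noteq> 1" "L*b \<noteq> -1"
    using p n by auto
qed

lemma dirA_even:
  fixes Q PP L S :: int
  assumes L2: "L \<ge> 2" and Q3: "Q \<ge> 3" and
   H: "(\<exists>c. -Q \<le> L*c \<and> L*c \<le> Q-2 \<and> S = Q*PP+1+L*c) \<or>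
   (\<exists>b. 1 \<le> b \<and> L*b \<le> Q-1 \<and> S = Q*PP+1+L*(b*PP)) \<or>
   (\<exists>b. 0 \<le> b \<and> L*b \<le> Q-3 \<and> S = Q*PP+1+2*(PP-1)+L*(b*PP))"
  shows "FsI Q PP S"
  using H
proof (elim disjE exE conjE)
  fix c assume h: "-Q \<le> L*c" "L*c \<le> Q-2" "S = Q*PP+1+L*c"
  have "L*c \<noteq> -1" using Lb[OF L2] by blast
  then have "1 + L*c > 0 \<or> 1 + L*c < 0" by linarith
  then show ?thesis
  proof
    assume "1 + L*c > 0"
    then show ?thesis unfolding FsI_def using h by (intro disjI2 disjI1 exI[of _ "1 + L*c"]) auto
  next
    assume "1 + L*c < 0"
    then show ?thesis unfolding FsI_def using h by (intro disjI1 exI[of _ "-(1 + L*c)"]) auto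
  qed
next
  fix b assume h: "1 \<le> b" "L*b \<le> Q-1" "S = Q*PP+1+L*(b*PP)"
  have "L*b \<ge> 0" using h(1) L2 by simp
  moreover have "S = Q*PP + (L*b)*PP + 1" using h(3) by (simp add: algebra_simps)
  ultimately show ?thesis unfolding FsI_def using h by (intro disjI2 disjI2 disjI1 exI[of _ "L*b"]) auto
next
  fix b assume h: "0 \<le> b" "L*b \<le> Q-3" "S = Q*PP+1+2*(PP-1)+L*(b*PP)"
  have "L*b \<ge> 0" using h(1) L2 by simp
  moreover have "S + 1 = Q*PP + (2 + L*b)*PP" using h(3) by (simp add: algebra_simps)
  ultimately show ?thesis unfolding FsI_def using h by (intro disjI2 disjI2 disjI2 exI[of _ "2 + L*b"]) auto
qed

lemma dirA_odd:
  fixes Q PP L S :: int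
  assumes L2: "L \<ge> 2" and Q3: "Q \<ge> 3" and
   H: "(\<exists>c. -(Q - 2) \<le> L*c \<and> L*c \<le> Q \<and> S = Q*PP-1+L*c) \<or>
   (\<exists>b. 1 \<le> b \<and> L*b \<le> Q-1 \<and> S = Q*PP-1+L*(b*PP)) \<or>
   (\<exists>b. 0 \<le> b \<and> L*b \<le> Q-3 \<and> S = Q*PP-1+2*(PP+1)+L*(b*PP))"
  shows "FsI Q PP S"
  using H
proof (elim disjE exE conjE)
  fix c assume h: "-(Q-2) \<le> L*c" "L*c \<le> Q" "S = Q*PP-1+L*c"
  have "L*c \<noteq> 1" using Lb[OF L2] by blast
  then have "L*c - 1 > 0 \<or> L*c - 1 < 0" by linarith
  then show ?thesis
  proof
    assume "L*c - 1 > 0"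
    then show ?thesis unfolding FsI_def using h by (intro disjI2 disjI1 exI[of _ "L*c - 1"]) auto
  next
    assume "L*c - 1 < 0"
    then show ?thesis unfolding FsI_def using h by (intro disjI1 exI[of _ "1 - L*c"]) auto
  qed
next
  fix b assume h: "1 \<le> b" "L*b \<le> Q-1" "S = Q*PP-1+L*(b*PP)"
  have "L*1 \<le> L*b" using h(1) L2 by (intro mult_left_mono) auto
  then have "L*b \<ge> 1" using L2 by linarith
  moreover have "S + 1 = Q*PP + (L*b)*PP" using h(3) by (simp add: algebra_simps)
  ultimately show ?thesis unfolding FsI_def using h by (intro disjI2 disjI2 disjI2 exI[of _ "L*b"]) auto
next
  fix b assume h: "0 \<le> b" "L*b \<le> Q-3" "S = Q*PP-1+2*(PP+1)+L*(b*PP)"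
  have "L*b \<ge> 0" using h(1) L2 by simp
  moreover have "S = Q*PP + (2 + L*b)*PP + 1" using h(3) by (simp add: algebra_simps)
  ultimately show ?thesis unfolding FsI_def using h by (intro disjI2 disjI2 disjI1 exI[of _ "2 + L*b"]) auto
qed


lemma pow_m: "(q::nat)^(2*t+1) = q*q^t*q^t"
proof -
  have "2*t+1 = Suc (t+t)" by simp
  then show ?thesis by (simp only: power_Suc power_add mult.assoc)
qed

lemma good_s:
  fixes q t s j :: nat
  assumes q3: "q \<ge> 3" and t2: "t \<ge> 2" and s1: "s \<ge> 1" and sb: "s + 2*q \<le> 2*q*q^t"
    and nd: "\<not> q dvd s" and nF: "\<not> Fs q (q^t) s" and j0: "0 < j" and j2: "j < 2*(2*t+1)"
  shows "s < s*q^j mod (q^(2*t+1)+1)"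
proof -
  define P where "P = q^t"
  define M where "M = q^(2*t+1)"
  have MP: "M = q*P*P" unfolding M_def P_def by (rule pow_m)
  have Pqq: "P \<ge> q*q"
  proof -
    have "q^2 \<le> q^t" using t2 q3 by (simp add: power_increasing)
    then show ?thesis by (simp add: P_def power2_eq_square)
  qed
  have sb3: "s + 2*q \<le> 2*q*P" using sb P_def by simp
  have P0: "P > 0" using P_def q3 by simp
  have "4 < P" using Pqq q3facts(3)[OF q3] q3 by linarith
  moreover have "q*P > 0" using P0 q3 by simp
  ultimately have "4*(q*P) < P*(q*P)" by (rule mult_strict_right_mono)
  moreover have "P*(q*P) = M" using MP by (simp add: algebra_simps)
  ultimately have "4*(q*P) < M" by simp
  then have sM: "2*s < M" using sb3 by linarith
  consider "j < 2*t+1" | "j = 2*t+1" | "j > 2*t+1" by linarith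
  then show ?thesis
  proof cases
    case 1
    define k where "k = 2*t+1-j"
    have k1: "1 \<le> k" "k \<le> 2*t" using 1 j0 k_def by auto
    have jk: "j = 2*t+1-k" using k_def 1 by simp
    note g = good_k[OF q3 t2 s1 sb nd nF k1]
    have QR: "q^k * q^(2*t+1-k) = M" using pow_QR[OF k1(2)] MP P_def by simp
    have "s < q^k * q^(2*t+1-k)" using QR sM by simp
    note ov = orbit_val[of "q^k" s "q^(2*t+1-k)", OF _ g(1) this]
    have "s*q^j mod (M+1) = (s mod q^k)*q^(2*t+1-k) - s div q^k"
      using ov(1) q3 jk QR by simp
    then show ?thesis using g(2) M_def by simp
  next
    case 2
    have "s*M mod (M+1) = M+1-s" using s1 sM by (intro neg_val) auto
    then show ?thesis using 2 sM M_def by simp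
  next
    case 3
    define k where "k = 2*(2*t+1)-j"
    have k1: "1 \<le> k" "k \<le> 2*t" using 3 j2 k_def by auto
    have jk: "j = (2*t+1-k) + (2*t+1)" using k_def 3 j2 by simp
    note g = good_k[OF q3 t2 s1 sb nd nF k1]
    have QR: "q^k * q^(2*t+1-k) = M" using pow_QR[OF k1(2)] MP P_def by simp
    have "s < q^k * q^(2*t+1-k)" using QR sM by simp
    note ov = orbit_val[of "q^k" s "q^(2*t+1-k)", OF _ g(1) this]
    have e: "s*q^j = s*q^(2*t+1-k)*(q^k * q^(2*t+1-k))" unfolding jk QR M_def
      by (simp only: power_add mult.assoc)
    have "s*q^j mod (M+1) = (s*q^(2*t+1-k)*(q^k * q^(2*t+1-k))) mod (q^k * q^(2*t+1-k) + 1)"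
      by (simp only: e QR)
    also have "\<dots> = q^k * q^(2*t+1-k)+1 - ((s mod q^k)*q^(2*t+1-k) - s div q^k)"
      using ov(2) q3 by simp
    finally have "s*q^j mod (M+1) = M+1 - ((s mod q^k)*q^(2*t+1-k) - s div q^k)"
      using QR by simp
    then show ?thesis using g(3) ov(3) QR M_def q3 by simp
  qed
qed


lemma pow_m': "(q::nat)^(2*t+1) = q*q^t*q^t"
proof -
  have "2*t+1 = Suc (t+t)" by simp
  then show ?thesis by (simp only: power_Suc power_add mult.assoc)
qed

lemma dvd_bad:
  fixes q s M :: nat
  assumes q2: "q \<ge> 2" and s1: "s \<ge> 1" and sM: "s < M + 1" and qs: "q dvd s"
    and qM: "q^(2*m) mod (M+1) = 1" and m1: "m \<ge> 1"
  shows "s*q^(2*m-1) mod (M+1) < s"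
proof -
  obtain s' where s': "s = q*s'" using qs by blast
  have "s' < s" using s' s1 q2 by (cases "s' = 0") auto
  have e: "2*m = Suc (2*m-1)" using m1 by simp
  have "s*q^(2*m-1) = s'*q^(2*m)" unfolding s' by (subst e) (simp only: power_Suc mult_ac)
  then have "s*q^(2*m-1) mod (M+1) = (s' * (q^(2*m) mod (M+1))) mod (M+1)"
    by (simp add: mod_mult_right_eq)
  also have "\<dots> = s' mod (M+1)" using qM by simp
  also have "\<dots> = s'" using \<open>s' < s\<close> sM by simp
  finally show ?thesis using \<open>s' < s\<close> by simp
qed

lemma ovt:
  fixes q t s :: nat
  assumes q3: "q \<ge> 3" and B1: "s mod q^t \<ge> 1" and sM: "s < q^(2*t+1)"
  shows "s*q^(t+1) mod (q^(2*t+1)+1) = (s mod q^t)*(q*q^t) - s div q^t"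
    "s*q^(t+1+(2*t+1)) mod (q^(2*t+1)+1) = q^(2*t+1)+1 - ((s mod q^t)*(q*q^t) - s div q^t)"
    "s div q^t < (s mod q^t)*(q*q^t)"
proof -
  have QR: "q^t*(q*q^t) = q^(2*t+1)" unfolding pow_m' by (simp only: mult_ac)
  have Q0: "q^t > 0" using q3 by simp
  note ov = orbit_val[of "q^t" s "q*q^t", OF Q0 B1, unfolded QR, OF sM]
  have e1: "q^(t+1) = q*q^t" by simp
  show "s*q^(t+1) mod (q^(2*t+1)+1) = (s mod q^t)*(q*q^t) - s div q^t" using ov(1) e1 by simp
  have "s*q^(t+1+(2*t+1)) = s*(q^(t+1)*q^(2*t+1))" by (simp only: power_add)
  also have "\<dots> = s*(q*q^t)*q^(2*t+1)" by (simp only: e1 mult.assoc)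
  finally have e2: "s*q^(t+1+(2*t+1)) = s*(q*q^t)*q^(2*t+1)" .
  show "s*q^(t+1+(2*t+1)) mod (q^(2*t+1)+1) = q^(2*t+1)+1 - ((s mod q^t)*(q*q^t) - s div q^t)"
    unfolding e2 by (rule ov(2))
  show "s div q^t < (s mod q^t)*(q*q^t)" by (rule ov(3))
qed

lemma ovt1:
  fixes q t s :: nat
  assumes q3: "q \<ge> 3" and B1: "s mod (q*q^t) \<ge> 1" and sM: "s < q^(2*t+1)"
  shows "s*q^t mod (q^(2*t+1)+1) = (s mod (q*q^t))*q^t - s div (q*q^t)"
    "s*q^(t+(2*t+1)) mod (q^(2*t+1)+1) = q^(2*t+1)+1 - ((s mod (q*q^t))*q^t - s div (q*q^t))"
    "s div (q*q^t) < (s mod (q*q^t))*q^t"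
proof -
  have QR: "(q*q^t)*q^t = q^(2*t+1)" unfolding pow_m' by (simp only: mult_ac)
  have Q0: "q*q^t > 0" using q3 by simp
  note ov = orbit_val[of "q*q^t" s "q^t", OF Q0 B1, unfolded QR, OF sM]
  show "s*q^t mod (q^(2*t+1)+1) = (s mod (q*q^t))*q^t - s div (q*q^t)" using ov(1) by simp
  have e2: "s*q^(t+(2*t+1)) = s*q^t*q^(2*t+1)" by (simp only: power_add mult.assoc)
  show "s*q^(t+(2*t+1)) mod (q^(2*t+1)+1) = q^(2*t+1)+1 - ((s mod (q*q^t))*q^t - s div (q*q^t))"
    unfolding e2 by (rule ov(2))
  show "s div (q*q^t) < (s mod (q*q^t))*q^t" by (rule ov(3))
qed


lemma divmod_eq: fixes A B Q :: nat assumes "B < Q"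
  shows "(A*Q + B) mod Q = B" "(A*Q + B) div Q = A"
  using assms by simp_all

lemma sq_mod: fixes M :: nat assumes "M \<ge> 1" shows "(M*M) mod (M+1) = 1"
proof -
  have "M*M = (M-1)*(M+1) + 1" using assms by (cases M) (simp_all add: algebra_simps)
  then show ?thesis using assms by (simp only: modlem)
qed

lemma bad_s:
  fixes q t s :: nat
  assumes q3: "q \<ge> 3" and t2: "t \<ge> 2" and s1: "s \<ge> 1" and sb: "s < 2*q*q^t + 2*q"
    and H: "Fs q (q^t) s \<or> 2*q*q^t < s + 2*q"
  shows "\<exists>j. s*q^j mod (q^(2*t+1)+1) < s"
proof -
  define P where "P = q^t"
  define M where "M = q^(2*t+1)"
  have MP: "M = P*(q*P)" unfolding M_def P_def pow_m' by (simp only: mult_ac)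
  have Pqq: "P \<ge> q*q"
  proof -
    have "q^2 \<le> q^t" using t2 q3 by (simp add: power_increasing)
    then show ?thesis by (simp add: P_def power2_eq_square)
  qed
  have q9: "3*q \<le> q*q" by (rule q3facts(3)[OF q3])
  have P3q: "3*q \<le> P" using Pqq q9 by linarith
  have qP0: "q*P > 0" using q3 P3q by simp
  have "4*(q*P) < P*(q*P)" using P3q q3 qP0 by (intro mult_strict_right_mono) linarith+
  have sb': "s < 2*(q*P) + 2*q" using sb P_def by simp
  have "q*1 \<le> q*P" using P3q q3 by (intro mult_le_mono2) linarith
  then have sM: "s < M" using sb' MP \<open>4*(q*P) < P*(q*P)\<close> by linarith
  show ?thesis
  proof (cases "q dvd s")
    case True
    have M1: "M \<ge> 1" using sM s1 by simp
    have "q^(2*(2*t+1)) = M*M" unfolding M_def by (simp only: power_mult_distrib power_mult mult.commute[of 2] power2_eq_square)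
    then have "q^(2*(2*t+1)) mod (M+1) = 1" using sq_mod[OF M1] by simp
    then have "s*q^(2*(2*t+1)-1) mod (M+1) < s"
      using dvd_bad[of q s M "2*t+1"] q3 s1 sM True by simp
    then show ?thesis unfolding M_def by blast
  next
    case nd: False
    have HH: "Fs q P s \<or> 2*(q*P) < s + 2*q" using H P_def by (simp add: mult.assoc)
    consider (f1) a where "a < q" "s = q*P + a*P + 1"
      | (f2) a where "1 \<le> a" "a < q" "s + 1 = q*P + a*P"
      | (f3) d where "1 \<le> d" "d \<le> q" "s = q*P + d"
      | (f4) d where "1 \<le> d" "d < q" "s + d = q*P"
      | (p3a) "2*(q*P) < s + 2*q" "s < 2*(q*P)"
      | (p3b) "2*(q*P) \<le> s"
      using HH unfolding Fs_def by (metis not_le)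
    then show ?thesis
    proof cases
      case (f1 a)
      have "1 < P" using P3q q3 by linarith
      then have "s mod P = 1" using f1 divmod_eq(1)[of 1 P "q+a"] by (simp add: algebra_simps)
      note o = ovt[OF q3, of s t, folded P_def M_def]
      have "s*q^(t+1) mod (M+1) \<le> 1*(q*P)" using o(1) \<open>s mod P = 1\<close> sM by simp
      then show ?thesis using f1 unfolding M_def by (intro exI[of _ "t+1"]) linarith
    next
      case (f2 a)
      define c where "c = q + a - 1"
      define P1 where "P1 = P - 1"
      have PP1: "P = P1 + 1" using P3q q3 P1_def by simp
      have "q + a = c + 1" using c_def f2 by simp
      have "s + 1 = (q+a)*P" using f2 by (simp only: add_mult_distrib)
      also have "\<dots> = c*P + P" using \<open>q + a = c + 1\<close> by simp
      finally have sc: "s = c*P + P1" using PP1 by linarith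
      have "P1 < P" using PP1 by simp
      then have sm: "s mod P = P1" "s div P = c" using sc divmod_eq by simp_all
      have P11: "P1 \<ge> 1" using PP1 P3q q3 by linarith
      note o = ovt[OF q3, of s t, folded P_def M_def]
      have o1: "s*q^(t+1+(2*t+1)) mod (M+1) = M+1 - (P1*(q*P) - c)" using o(2) sm P11 sM by simp
      have o3: "c < P1*(q*P)" using o(3) sm P11 sM by simp
      have "M = P1*(q*P) + q*P" using MP PP1 by (simp add: algebra_simps)
      moreover have "q \<le> c" using c_def f2 by linarith
      then have "q*P \<le> c*P" by (rule mult_le_mono1)
      moreover have "c + 1 < P1" using c_def f2 PP1 P3q by linarith
      ultimately have "M+1 - (P1*(q*P) - c) < s" using sc o3 by linarith
      then show ?thesis using o1 unfolding M_def by (intro exI[of _ "t+1+(2*t+1)"]) simp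
    next
      case (f3 d)
      have "d \<noteq> q" using nd f3 by auto
      have "d < q*P" using f3 P3q q3 by (metis le_trans less_le_trans mult_le_mono2 nat_mult_1_right le_neq_implies_less
            \<open>d \<noteq> q\<close> less_imp_le_nat one_le_numeral le_add2 mult_le_cancel1)
      then have sm: "s mod (q*P) = d" using f3 divmod_eq(1)[of d "q*P" 1] by simp
      note o = ovt1[OF q3, of s t, folded P_def M_def]
      have "s*P mod (M+1) \<le> d*P" using o(1) sm f3 sM by simp
      moreover have "d*P \<le> q*P" using f3 by simp
      ultimately have "s*P mod (M+1) < s" using f3 by linarith
      then show ?thesis unfolding M_def P_def by (intro exI[of _ t])
    next
      case (f4 d)
      have "s < q*P" using f4 by linarith
      then have sm: "s mod (q*P) = s" "s div (q*P) = 0" by simp_all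
      note o = ovt1[OF q3, of s t, folded P_def M_def]
      have o2: "s*q^(t+(2*t+1)) mod (M+1) = M+1 - s*P" using o(2) sm s1 sM by simp
      have "M = s*P + d*P" using MP f4 by (metis add_mult_distrib mult.commute)
      moreover have "d+1 \<le> q" using f4 by simp
      then have "(d+1)*P \<le> q*P" by (rule mult_le_mono1)
      moreover have "d + 1 < P" using f4 P3q by linarith
      moreover have "(d+1)*P = d*P + P" by simp
      ultimately have "M + 1 - s*P < s" using f4 by linarith
      then show ?thesis using o2 unfolding M_def by (intro exI[of _ "t+(2*t+1)"]) simp
    next
      case p3a
      define B where "B = s - q*P"
      have q2P: "q*2 \<le> q*P" using P3q q3 by (intro mult_le_mono2) linarith
      then have "q*P \<le> s" using p3a by linarith
      then have sB: "s = 1*(q*P) + B" using B_def by simp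
      have BqP: "B < q*P" using p3a B_def by linarith
      have B1: "B \<ge> 1" using p3a B_def q2P by linarith
      have sm: "s mod (q*P) = B" "s div (q*P) = 1" using sB BqP divmod_eq by metis+
      note o = ovt1[OF q3, of s t, folded P_def M_def]
      have o2: "s*q^(t+(2*t+1)) mod (M+1) = M+1 - (B*P - 1)" using o(2) sm B1 sM by simp
      have o3: "1 < B*P" using o(3) sm B1 sM by simp
      have "q*P + 1 \<le> B + 2*q" using p3a B_def by linarith
      then have "(q*P + 1)*P \<le> (B + 2*q)*P" by (rule mult_le_mono1)
      moreover have "(q*P + 1)*P = M + P" using MP by (simp add: algebra_simps)
      moreover have "(B + 2*q)*P = B*P + 2*(q*P)" by (simp add: algebra_simps)
      moreover have "2*q + 2 < P" using P3q q3 by linarith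
      ultimately have "M + 1 - (B*P - 1) < s" using sB o3 p3a B_def by linarith
      then show ?thesis using o2 unfolding M_def by (intro exI[of _ "t+(2*t+1)"]) simp
    next
      case p3b
      have "s \<noteq> 2*(q*P)" using nd by auto
      define B where "B = s - 2*(q*P)"
      have sB: "s = 2*(q*P) + B" using p3b B_def by simp
      have B1: "B \<ge> 1" using p3b B_def \<open>s \<noteq> 2*(q*P)\<close> by linarith
      have B2q: "B < 2*q" using sb' sB by linarith
      have "q*2 \<le> q*P" using P3q q3 by (intro mult_le_mono2) linarith
      then have BqP: "B < q*P" using B2q by linarith
      have sm: "s mod (q*P) = B" using sB BqP divmod_eq(1)[of B "q*P" 2] by simp
      note o = ovt1[OF q3, of s t, folded P_def M_def]
      have "s*P mod (M+1) \<le> B*P" using o(1) sm B1 sM by simp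
      moreover have "B*P < (2*q)*P" using B2q qP0 by simp
      moreover have "(2*q)*P = 2*(q*P)" by simp
      ultimately have "s*P mod (M+1) < s" using sB by linarith
      then show ?thesis unfolding M_def P_def by (intro exI[of _ t])
    qed
  qed
qed


lemma rle: fixes l :: nat and c y :: int assumes "l > 0"
  shows "(real_of_int c \<le> real_of_int y / real l) \<longleftrightarrow> int l * c \<le> y"
proof -
  have "(real_of_int c \<le> real_of_int y / real l) \<longleftrightarrow> real l * real_of_int c \<le> real_of_int y"
    using assms by (simp add: pos_le_divide_eq mult.commute)
  also have "\<dots> \<longleftrightarrow> real_of_int (int l * c) \<le> real_of_int y" by simp
  also have "\<dots> \<longleftrightarrow> int l * c \<le> y" by (rule of_int_le_iff)
  finally show ?thesis .
qed

lemma rge: fixes l :: nat and c y :: int assumes "l > 0"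
  shows "(- (real_of_int y / real l) \<le> real_of_int c) \<longleftrightarrow> - y \<le> int l * c"
proof -
  have "(- (real_of_int y / real l) \<le> real_of_int c) \<longleftrightarrow> (real_of_int (-c) \<le> real_of_int y / real l)" by auto
  also have "\<dots> \<longleftrightarrow> int l * (-c) \<le> y" by (rule rle[OF assms])
  finally show ?thesis by arith
qed

lemma div_eq1: fixes A X Y L :: int assumes "L dvd A" "L \<noteq> 0"
  shows "(X = A div L + Y) \<longleftrightarrow> (L*X = A + L*Y)"
proof -
  obtain k where k: "A = L*k" using assms(1) by blast
  have "A div L = k" using k assms(2) by simp
  then have "(X = A div L + Y) \<longleftrightarrow> (X = k + Y)" by simp
  also have "\<dots> \<longleftrightarrow> (L*X = L*(k + Y))" using assms(2) by simp
  also have "L*(k+Y) = A + L*Y" using k by (simp add: algebra_simps)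
  finally show ?thesis .
qed

lemma div_eq2: fixes A B X Y L :: int assumes "L dvd A" "L dvd B" "L \<noteq> 0"
  shows "(X = A div L + 2*(B div L) + Y) \<longleftrightarrow> (L*X = A + 2*B + L*Y)"
proof -
  obtain k where k: "A = L*k" using assms(1) by blast
  obtain k' where k': "B = L*k'" using assms(2) by blast
  have "A div L = k" "B div L = k'" using k k' assms(3) by simp_all
  then have "(X = A div L + 2*(B div L) + Y) \<longleftrightarrow> (X = k + 2*k' + Y)" by simp
  also have "\<dots> \<longleftrightarrow> (L*X = L*(k + 2*k' + Y))" using assms(3) by simp
  also have "L*(k + 2*k' + Y) = A + 2*B + L*Y" using k k' by (simp add: algebra_simps)
  finally show ?thesis .
qed

lemma Tset_even:
  fixes q l t :: nat and X :: int
  assumes l0: "l > 0" and ev: "even t" and d1: "int l dvd int q ^ (t+1) + 1" and d2: "int l dvd int q ^ t - 1"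
  shows "X \<in> Tset q l t \<longleftrightarrow>
   (\<exists>c. -int q \<le> int l*c \<and> int l*c \<le> int q-2 \<and> int l*X = int q^(t+1)+1+int l*c) \<or>
   (\<exists>b. 1 \<le> b \<and> int l*b \<le> int q-1 \<and> int l*X = int q^(t+1)+1+int l*(b*int q^t)) \<or>
   (\<exists>b. 0 \<le> b \<and> int l*b \<le> int q-3 \<and> int l*X = int q^(t+1)+1+2*(int q^t-1)+int l*(b*int q^t))"
proof -
  have L0: "int l \<noteq> 0" using l0 by simp
  have c1: "\<And>c. (-(real q / real l) \<le> real_of_int c \<and> real_of_int c \<le> (real q - 2)/real l)
     \<longleftrightarrow> (-int q \<le> int l*c \<and> int l*c \<le> int q - 2)"
    using rle[OF l0, of _ "int q - 2"] rge[OF l0, of "int q"] by simp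
  have c2: "\<And>b. (1 \<le> real_of_int b \<and> real_of_int b \<le> (real q - 1)/real l)
     \<longleftrightarrow> (1 \<le> b \<and> int l*b \<le> int q - 1)"
    using rle[OF l0, of _ "int q - 1"] by simp
  have c3: "\<And>b. (0 \<le> real_of_int b \<and> real_of_int b \<le> (real q - 3)/real l)
     \<longleftrightarrow> (0 \<le> b \<and> int l*b \<le> int q - 3)"
    using rle[OF l0, of _ "int q - 3"] by simp
  have e1: "\<And>c. X = ffun q l t 0 0 c \<longleftrightarrow> int l*X = int q^(t+1)+1+int l*c"
    unfolding ffun_def using div_eq1[OF d1 L0] by simp
  have e2: "\<And>b. X = ffun q l t 0 b 0 \<longleftrightarrow> int l*X = int q^(t+1)+1+int l*(b*int q^t)"
    unfolding ffun_def using div_eq1[OF d1 L0] by simp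
  have e3: "\<And>b. X = ffun q l t 2 b 0 \<longleftrightarrow> int l*X = int q^(t+1)+1+2*(int q^t-1)+int l*(b*int q^t)"
    unfolding ffun_def using div_eq2[OF d1 d2 L0] by simp
  show ?thesis unfolding Tset_def using ev c1 c2 c3 e1 e2 e3 by auto
qed


lemma Tset_odd:
  fixes q l t :: nat and X :: int
  assumes l0: "l > 0" and od: "odd t" and d1: "int l dvd int q ^ (t+1) - 1" and d2: "int l dvd int q ^ t + 1"
  shows "X \<in> Tset q l t \<longleftrightarrow>
   (\<exists>c. -(int q - 2) \<le> int l*c \<and> int l*c \<le> int q \<and> int l*X = int q^(t+1)-1+int l*c) \<or>
   (\<exists>b. 1 \<le> b \<and> int l*b \<le> int q-1 \<and> int l*X = int q^(t+1)-1+int l*(b*int q^t)) \<or>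
   (\<exists>b. 0 \<le> b \<and> int l*b \<le> int q-3 \<and> int l*X = int q^(t+1)-1+2*(int q^t+1)+int l*(b*int q^t))"
proof -
  have L0: "int l \<noteq> 0" using l0 by simp
  have c1: "\<And>c. (-((real q - 2) / real l) \<le> real_of_int c \<and> real_of_int c \<le> real q/real l)
     \<longleftrightarrow> (-(int q - 2) \<le> int l*c \<and> int l*c \<le> int q)"
    using rle[OF l0, of _ "int q"] rge[OF l0, of "int q - 2"] by simp
  have c2: "\<And>b. (1 \<le> real_of_int b \<and> real_of_int b \<le> (real q - 1)/real l)
     \<longleftrightarrow> (1 \<le> b \<and> int l*b \<le> int q - 1)"
    using rle[OF l0, of _ "int q - 1"] by simp
  have c3: "\<And>b. (0 \<le> real_of_int b \<and> real_of_int b \<le> (real q - 3)/real l)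
     \<longleftrightarrow> (0 \<le> b \<and> int l*b \<le> int q - 3)"
    using rle[OF l0, of _ "int q - 3"] by simp
  have e1: "\<And>c. X = gfun q l t 0 0 c \<longleftrightarrow> int l*X = int q^(t+1)-1+int l*c"
    unfolding gfun_def using div_eq1[OF d1 L0] by simp
  have e2: "\<And>b. X = gfun q l t 0 b 0 \<longleftrightarrow> int l*X = int q^(t+1)-1+int l*(b*int q^t)"
    unfolding gfun_def using div_eq1[OF d1 L0] by simp
  have e3: "\<And>b. X = gfun q l t 2 b 0 \<longleftrightarrow> int l*X = int q^(t+1)-1+2*(int q^t+1)+int l*(b*int q^t)"
    unfolding gfun_def using div_eq2[OF d1 d2 L0] by simp
  show ?thesis unfolding Tset_def using od c1 c2 c3 e1 e2 e3 by auto
qed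


lemma dirB_even:
  fixes Q PP L X r u :: int
  assumes L2: "L \<ge> 2" and Q3: "Q \<ge> 3" and Qr: "Q = L*r - 1" and Pu: "PP = L*u + 1"
    and nd: "\<not> Q dvd L*X" and F: "FsI Q PP (L*X)"
  shows "(\<exists>c. -Q \<le> L*c \<and> L*c \<le> Q-2 \<and> L*X = Q*PP+1+L*c) \<or>
   (\<exists>b. 1 \<le> b \<and> L*b \<le> Q-1 \<and> L*X = Q*PP+1+L*(b*PP)) \<or>
   (\<exists>b. 0 \<le> b \<and> L*b \<le> Q-3 \<and> L*X = Q*PP+1+2*(PP-1)+L*(b*PP))"
proof -
  define k where "k = r*L*u + r - u"
  have kk: "Q*PP + 1 = L*k" unfolding k_def Qr Pu by (simp add: algebra_simps)
  have Lc: "L*(X - k) = L*X - (Q*PP + 1)" using kk by (simp add: right_diff_distrib)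
  from F show ?thesis unfolding FsI_def
  proof (elim disjE exE conjE)
    fix d assume h: "1 \<le> d" "d < Q" "L*X + d = Q*PP"
    show ?thesis using h Lc by (intro disjI1 exI[of _ "X - k"]) linarith
  next
    fix d assume h: "1 \<le> d" "d \<le> Q" "L*X = Q*PP + d"
    have "d \<noteq> Q"
    proof
      assume "d = Q" then have "L*X = Q*(PP+1)" using h by (simp add: algebra_simps)
      then show False using nd by simp
    qed
    then show ?thesis using h Lc by (intro disjI1 exI[of _ "X - k"]) linarith
  next
    fix a assume h: "0 \<le> a" "a < Q" "L*X = Q*PP + a*PP + 1"
    define b where "b = X - k - a*u"
    have "L*b = L*(X-k) - a*(L*u)" unfolding b_def by (simp add: algebra_simps)
    moreover have "a*PP = a*(L*u) + a" unfolding Pu by (simp add: algebra_simps)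
    ultimately have ab: "a = L*b" using Lc h(3) by linarith
    show ?thesis
    proof (cases "a = 0")
      case True
      then show ?thesis using h Lc Q3 by (intro disjI1 exI[of _ "X - k"]) auto
    next
      case False
      then have "b \<ge> 1" using Lb(1)[OF L2, of b] ab h(1) by linarith
      moreover have "L*(b*PP) = a*PP" using ab by (simp add: algebra_simps)
      ultimately show ?thesis using h ab by (intro disjI2 disjI1 exI[of _ b]) linarith
    qed
  next
    fix a assume h: "1 \<le> a" "a < Q" "L*X + 1 = Q*PP + a*PP"
    define b where "b = X - k - 2*u - (a-2)*u"
    have "L*b = L*(X-k) - 2*(L*u) - (a-2)*(L*u)" unfolding b_def by (simp add: algebra_simps)
    moreover have "(a-2)*PP = (a-2)*(L*u) + (a-2)" unfolding Pu by (simp add: algebra_simps)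
    moreover have "(a-2)*PP = a*PP - 2*PP" by (simp add: algebra_simps)
    ultimately have ab: "a - 2 = L*b" using Lc h(3) Pu by linarith
    have "a \<noteq> 1" using Lb(4)[OF L2, of b] ab by auto
    then have "b \<ge> 0" using Lb(2)[OF L2, of b] ab h(1) by linarith
    moreover have "L*(b*PP) = (a-2)*PP" using ab by (simp add: algebra_simps)
    moreover have "(a-2)*PP = a*PP - 2*PP" by (simp add: algebra_simps)
    moreover have "2*(PP-1) = 2*PP - 2" by simp
    ultimately show ?thesis using h ab by (intro disjI2 disjI2 exI[of _ b]) linarith
  qed
qed

lemma dirB_odd:
  fixes Q PP L X r u :: int
  assumes L2: "L \<ge> 2" and Q3: "Q \<ge> 3" and Qr: "Q = L*r - 1" and Pu: "PP = L*u - 1"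
    and nd: "\<not> Q dvd L*X" and F: "FsI Q PP (L*X)"
  shows "(\<exists>c. -(Q - 2) \<le> L*c \<and> L*c \<le> Q \<and> L*X = Q*PP-1+L*c) \<or>
   (\<exists>b. 1 \<le> b \<and> L*b \<le> Q-1 \<and> L*X = Q*PP-1+L*(b*PP)) \<or>
   (\<exists>b. 0 \<le> b \<and> L*b \<le> Q-3 \<and> L*X = Q*PP-1+2*(PP+1)+L*(b*PP))"
proof -
  define k where "k = r*L*u - r - u"
  have kk: "Q*PP - 1 = L*k" unfolding k_def Qr Pu by (simp add: algebra_simps)
  have Lc: "L*(X - k) = L*X - (Q*PP - 1)" using kk by (simp add: right_diff_distrib)
  from F show ?thesis unfolding FsI_def
  proof (elim disjE exE conjE)
    fix d assume h: "1 \<le> d" "d < Q" "L*X + d = Q*PP"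
    show ?thesis using h Lc by (intro disjI1 exI[of _ "X - k"]) linarith
  next
    fix d assume h: "1 \<le> d" "d \<le> Q" "L*X = Q*PP + d"
    have "d \<noteq> Q"
    proof
      assume "d = Q" then have "L*X = Q*(PP+1)" using h by (simp add: algebra_simps)
      then show False using nd by simp
    qed
    then show ?thesis using h Lc by (intro disjI1 exI[of _ "X - k"]) linarith
  next
    fix a assume h: "0 \<le> a" "a < Q" "L*X = Q*PP + a*PP + 1"
    define b where "b = (a-2)*u - (X-k) + 2*u"
    have "L*b = (a-2)*(L*u) - L*(X-k) + 2*(L*u)" unfolding b_def by (simp add: algebra_simps)
    moreover have "(a-2)*PP = (a-2)*(L*u) - (a-2)" unfolding Pu by (simp add: algebra_simps)
    moreover have "(a-2)*PP = a*PP - 2*PP" by (simp add: algebra_simps)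
    ultimately have ab: "a - 2 = L*b" using Lc h(3) Pu by linarith
    have "a \<noteq> 1" using Lb(4)[OF L2, of b] ab by auto
    show ?thesis
    proof (cases "a = 0")
      case True
      then show ?thesis using h Lc Q3 by (intro disjI1 exI[of _ "X - k"]) auto
    next
      case False
      then have "b \<ge> 0" using Lb(2)[OF L2, of b] ab h(1) \<open>a \<noteq> 1\<close> by linarith
      moreover have "L*(b*PP) = (a-2)*PP" using ab by (simp add: algebra_simps)
      moreover have "(a-2)*PP = a*PP - 2*PP" by (simp add: algebra_simps)
      moreover have "2*(PP+1) = 2*PP + 2" by simp
      ultimately show ?thesis using h ab by (intro disjI2 disjI2 exI[of _ b]) linarith
    qed
  next
    fix a assume h: "1 \<le> a" "a < Q" "L*X + 1 = Q*PP + a*PP"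
    define b where "b = a*u - (X-k)"
    have "L*b = a*(L*u) - L*(X-k)" unfolding b_def by (simp add: algebra_simps)
    moreover have "a*PP = a*(L*u) - a" unfolding Pu by (simp add: algebra_simps)
    ultimately have ab: "a = L*b" using Lc h(3) by linarith
    then have "b \<ge> 1" using Lb(1)[OF L2, of b] h(1) by linarith
    moreover have "L*(b*PP) = a*PP" using ab by (simp add: algebra_simps)
    ultimately show ?thesis using h ab by (intro disjI2 disjI1 exI[of _ b]) linarith
  qed
qed


lemma coset_sub: "n > 0 \<Longrightarrow> cyc_coset q n i \<subseteq> {..<n}"
  unfolding cyc_coset_def by auto

lemma not_leader: fixes q n i j :: nat assumes "i*q^j mod n < i" shows "\<not> coset_leader q n i"
proof
  assume L: "coset_leader q n i"
  then have n0: "n > 0" and iM: "i = Min (cyc_coset q n i)" unfolding coset_leader_def by auto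
  have fin: "finite (cyc_coset q n i)" using coset_sub[OF n0] finite_subset by blast
  have "i*q^j mod n \<in> cyc_coset q n i" unfolding cyc_coset_def by blast
  then have "Min (cyc_coset q n i) \<le> i*q^j mod n" using fin by simp
  then show False using iM assms by simp
qed

lemma pow_mod_period: fixes q n M j :: nat assumes "q^M mod n = 1"
  shows "i*q^j mod n = i*q^(j mod M) mod n"
proof -
  have n1: "n \<noteq> 1" using assms by auto
  have one: "(1::nat) mod n = 1" using n1 by (cases n) auto
  have "q^j = q^(M*(j div M) + j mod M)" by simp
  also have "\<dots> = (q^M)^(j div M) * q^(j mod M)" by (simp only: power_add power_mult)
  finally have e: "i*q^j = (i * q^(j mod M)) * (q^M)^(j div M)" by (simp only: mult_ac)
  have "i*q^j mod n = ((i * q^(j mod M)) * ((q^M)^(j div M) mod n)) mod n"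
    by (simp only: e mod_mult_right_eq)
  also have "(q^M)^(j div M) mod n = (q^M mod n)^(j div M) mod n" by (simp only: power_mod)
  also have "\<dots> = 1" using assms one by simp
  finally show ?thesis by simp
qed

lemma leader_card:
  fixes q n i M :: nat
  assumes n0: "n > 0" and iN: "i < n" and M0: "M > 0" and qM: "q^M mod n = 1"
    and strict: "\<And>j. 0 < j \<Longrightarrow> j < M \<Longrightarrow> i < i*q^j mod n"
  shows "coset_leader q n i \<and> card (cyc_coset q n i) = M"
proof -
  define f where "f = (\<lambda>j. i*q^j mod n)"
  have cos: "cyc_coset q n i = f ` {..<M}"
  proof
    show "cyc_coset q n i \<subseteq> f ` {..<M}"
    proof
      fix y assume "y \<in> cyc_coset q n i"
      then obtain j where "y = i*q^j mod n" unfolding cyc_coset_def by blast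
      then have "y = f (j mod M)" using pow_mod_period[OF qM] f_def by simp
      moreover have "j mod M < M" using M0 by simp
      ultimately show "y \<in> f ` {..<M}" by blast
    qed
    show "f ` {..<M} \<subseteq> cyc_coset q n i" unfolding f_def cyc_coset_def by blast
  qed
  have f0: "f 0 = i" using iN f_def by simp
  have ge: "\<And>j. j < M \<Longrightarrow> i \<le> f j"
  proof -
    fix j assume "j < M"
    show "i \<le> f j" using strict[of j] f0 \<open>j < M\<close> by (cases "j = 0") (auto simp: f_def)
  qed
  have "Min (f ` {..<M}) = i"
  proof (rule Min_eqI)
    show "finite (f ` {..<M})" by simp
    show "\<And>y. y \<in> f ` {..<M} \<Longrightarrow> i \<le> y" using ge by auto
    show "i \<in> f ` {..<M}" using f0 M0 by force
  qed
  then have lead: "coset_leader q n i" unfolding coset_leader_def using iN cos by simp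
  have ne: "\<And>a b. a < b \<Longrightarrow> b < M \<Longrightarrow> f a \<noteq> f b"
  proof
    fix a b assume ab: "a < b" "b < M" and eq: "f a = f b"
    have "i*q^(a + (M-b)) mod n = (i*q^a mod n) * q^(M-b) mod n"
      by (simp only: power_add mod_mult_left_eq mult.assoc)
    also have "\<dots> = (i*q^b mod n) * q^(M-b) mod n" using eq f_def by simp
    also have "\<dots> = i*(q^b*q^(M-b)) mod n" by (simp only: mod_mult_left_eq mult.assoc)
    also have "q^b*q^(M-b) = q^M" using ab by (simp flip: power_add)
    also have "i*q^M mod n = i * (q^M mod n) mod n" by (simp only: mod_mult_right_eq)
    also have "\<dots> = i" using qM iN by simp
    finally have "i*q^(a + (M-b)) mod n = i" .
    moreover have "0 < a + (M-b)" "a + (M-b) < M" using ab by auto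
    then have "i < i*q^(a + (M-b)) mod n" by (rule strict)
    ultimately show False by simp
  qed
  have "inj_on f {..<M}"
  proof (rule inj_onI)
    fix a b assume "a \<in> {..<M}" "b \<in> {..<M}" "f a = f b"
    then show "a = b" using ne by (metis lessThan_iff linorder_neqE_nat)
  qed
  then have "card (f ` {..<M}) = M" by (simp add: card_image)
  then show ?thesis using lead cos by simp
qed


lemma T_char:
  fixes q l t i :: nat and r u :: int
  assumes l2: "l \<ge> 2" and q3: "q \<ge> 3" and Qr: "int q = int l * r - 1"
    and Pu: "int q ^ t = int l * u + (if even t then 1 else -1)"
  shows "int i \<in> Tset q l t \<Longrightarrow> Fs q (q^t) (l*i)"
    and "Fs q (q^t) (l*i) \<Longrightarrow> \<not> q dvd l*i \<Longrightarrow> int i \<in> Tset q l t"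
proof -
  have L2: "int l \<ge> 2" and Q3: "int q \<ge> 3" and l0: "l > 0" using l2 q3 by simp_all
  have pw: "int q ^ (t+1) = int q * int q ^ t" by simp
  have conv: "Fs q (q^t) (l*i) \<longleftrightarrow> FsI (int q) (int q ^ t) (int l * int i)"
    using Fs_FsI[of q "q^t" "l*i"] by simp
  have ndc: "\<not> q dvd l*i \<Longrightarrow> \<not> int q dvd int l * int i"
    by (metis int_dvd_int_iff of_nat_mult)
  have "(int i \<in> Tset q l t \<longrightarrow> Fs q (q^t) (l*i)) \<and>
        (Fs q (q^t) (l*i) \<longrightarrow> \<not> q dvd l*i \<longrightarrow> int i \<in> Tset q l t)"
  proof (cases "even t")
    case True
    then have Pu': "int q ^ t = int l * u + 1" using Pu by simp
    have "int q^(t+1) + 1 = (int l*r - 1)*(int l*u + 1) + 1" by (simp only: pw Qr[symmetric] Pu'[symmetric])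
    also have "\<dots> = int l * (r*int l*u + r - u)" by (simp add: algebra_simps)
    finally have d1: "int l dvd int q^(t+1) + 1" by (rule dvdI)
    have "int q^t - 1 = int l * u" using Pu' by simp
    then have d2: "int l dvd int q^t - 1" by (rule dvdI)
    note TE = Tset_even[OF l0 True d1 d2, of "int i", unfolded pw]
    show ?thesis
    proof (intro conjI impI)
      assume a: "int i \<in> Tset q l t"
      have "FsI (int q) (int q ^ t) (int l * int i)"
        by (rule dirA_even[OF L2 Q3 TE[THEN iffD1, OF a]])
      then show "Fs q (q^t) (l*i)" using conv by simp
    next
      assume F: "Fs q (q^t) (l*i)" and nd: "\<not> q dvd l*i"
      have F': "FsI (int q) (int q ^ t) (int l * int i)" using F conv by simp
      show "int i \<in> Tset q l t"
        by (rule TE[THEN iffD2, OF dirB_even[OF L2 Q3 Qr Pu' ndc[OF nd] F']])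
    qed
  next
    case False
    then have Pu': "int q ^ t = int l * u - 1" using Pu by simp
    have "int q^(t+1) - 1 = (int l*r - 1)*(int l*u - 1) - 1" by (simp only: pw Qr[symmetric] Pu'[symmetric])
    also have "\<dots> = int l * (r*int l*u - r - u)" by (simp add: algebra_simps)
    finally have d1: "int l dvd int q^(t+1) - 1" by (rule dvdI)
    have "int q^t + 1 = int l * u" using Pu' by simp
    then have d2: "int l dvd int q^t + 1" by (rule dvdI)
    note TE = Tset_odd[OF l0 False d1 d2, of "int i", unfolded pw]
    show ?thesis
    proof (intro conjI impI)
      assume a: "int i \<in> Tset q l t"
      have "FsI (int q) (int q ^ t) (int l * int i)"
        by (rule dirA_odd[OF L2 Q3 TE[THEN iffD1, OF a]])
      then show "Fs q (q^t) (l*i)" using conv by simp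
    next
      assume F: "Fs q (q^t) (l*i)" and nd: "\<not> q dvd l*i"
      have F': "FsI (int q) (int q ^ t) (int l * int i)" using F conv by simp
      show "int i \<in> Tset q l t"
        by (rule TE[THEN iffD2, OF dirB_odd[OF L2 Q3 Qr Pu' ndc[OF nd] F']])
    qed
  qed
  then show "int i \<in> Tset q l t \<Longrightarrow> Fs q (q^t) (l*i)"
    and "Fs q (q^t) (l*i) \<Longrightarrow> \<not> q dvd l*i \<Longrightarrow> int i \<in> Tset q l t" by blast+
qed

lemma pow_cong:
  fixes Q L r :: int assumes "Q = L*r - 1"
  shows "\<exists>u. Q^t = L*u + (if even t then 1 else -1)"
proof (induction t)
  case 0
  show ?case by (intro exI[of _ 0]) simp
next
  case (Suc t)
  then obtain u where u: "Q^t = L*u + (if even t then 1 else -1)" by blast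
  show ?case
  proof (cases "even t")
    case True
    then have "Q^Suc t = (L*r - 1)*(L*u + 1)" using u assms by simp
    also have "\<dots> = L*(r*L*u + r - u) + (-1)" by (simp add: algebra_simps)
    finally show ?thesis using True by (intro exI[of _ "r*L*u + r - u"]) simp
  next
    case False
    then have "Q^Suc t = (L*r - 1)*(L*u - 1)" using u assms by simp
    also have "\<dots> = L*(r*L*u - r - u) + 1" by (simp add: algebra_simps)
    finally show ?thesis using False by (intro exI[of _ "r*L*u - r - u"]) simp
  qed
qed

lemma Fs_bound: fixes q P s :: nat assumes "Fs q P s" "P \<ge> 1" shows "s < 2*q*P + 2*q" "s \<ge> 1"
proof -
  have tq: "2*q*P = 2*(q*P)" by simp
  have "s < 2*q*P + 2*q \<and> s \<ge> 1" using assms(1) unfolding Fs_def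
  proof (elim disjE exE conjE)
    fix d assume "1 \<le> d" "d < q" "s + d = q*P"
    moreover have "q*1 \<le> q*P" using assms(2) by (intro mult_le_mono2)
    ultimately show ?thesis using tq by linarith
  next
    fix d assume "1 \<le> d" "d \<le> q" "s = q*P + d"
    then show ?thesis using tq by linarith
  next
    fix a assume h: "a < q" "s = q*P + a*P + 1"
    have "(a+1)*P \<le> q*P" using h(1) by (intro mult_le_mono1) simp
    moreover have "(a+1)*P = a*P + P" by simp
    moreover have "2*q*P = 2*(q*P)" by simp
    ultimately show ?thesis using h assms(2) by linarith
  next
    fix a assume h: "1 \<le> a" "a < q" "s + 1 = q*P + a*P"
    have "a*P \<le> q*P" using h(2) by (intro mult_le_mono1) simp
    moreover have "q*1 \<le> q*P" using assms(2) by (intro mult_le_mono2)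
    ultimately show ?thesis using h tq by linarith
  qed
  then show "s < 2*q*P + 2*q" "s \<ge> 1" by auto
qed


lemma rconv_lt: fixes l i :: nat and X :: real assumes "l > 0"
  shows "real i < X / real l \<longleftrightarrow> real (l*i) < X"
  using assms by (simp add: pos_less_divide_eq mult.commute)

lemma rconv_ge: fixes l i :: nat and X :: real assumes "l > 0"
  shows "X / real l \<le> real i \<longleftrightarrow> X \<le> real (l*i)"
  using assms by (simp add: pos_divide_le_eq mult.commute)

lemma rconv_le: fixes l i :: nat and X :: real assumes "l > 0"
  shows "real i \<le> X / real l \<longleftrightarrow> real (l*i) \<le> X"
  using assms by (simp add: pos_le_divide_eq mult.commute)

lemma nat_of_real1: fixes s q t :: nat
  assumes "real s < 2 * real q ^ (t+1) - 2 * real q + 1" shows "s + 2*q \<le> 2*q*q^t"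
proof -
  have "real (s + 2*q) < real (2*q*q^t + 1)" using assms by simp
  then have "s + 2*q < 2*q*q^t + 1" by (simp only: of_nat_less_iff)
  then show ?thesis by simp
qed

lemma nat_of_real2: fixes s q t :: nat
  assumes "2 * real q ^ (t+1) - 2 * real q + 1 \<le> real s" "real s \<le> 2 * real q ^ (t+1) + 2 * real q - 1"
  shows "2*q*q^t < s + 2*q" "s < 2*q*q^t + 2*q"
proof -
  have "real (2*q*q^t + 1) \<le> real (s + 2*q)" using assms(1) by simp
  then have "2*q*q^t + 1 \<le> s + 2*q" by (simp only: of_nat_le_iff)
  then show "2*q*q^t < s + 2*q" by simp
  have "real (s + 1) \<le> real (2*q*q^t + 2*q)" using assms(2) by simp
  then have "s + 1 \<le> 2*q*q^t + 2*q" by (simp only: of_nat_le_iff)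
  then show "s < 2*q*q^t + 2*q" by simp
qed

theorem lemma12:
  fixes q l m t n :: nat
  assumes "prime_power q" and "odd q"
    and "l dvd q + 1" and "2 \<le> l" and "l < q + 1"
    and "m = 2 * t + 1" and "m \<ge> 5"
    and "n = (q ^ m + 1) div l"
  shows "(\<forall>i::nat. 1 \<le> i \<and> real i < (2 * real q ^ (t+1) - 2 * real q + 1) / real l
              \<and> \<not> q dvd i \<and> int i \<notin> Tset q l t
            \<longrightarrow> coset_leader q n i \<and> card (cyc_coset q n i) = 2 * m)
       \<and> (\<forall>i::nat. int i \<in> Tset q l t \<and> \<not> q dvd i \<longrightarrow> \<not> coset_leader q n i)
       \<and> (\<forall>i::nat. (2 * real q ^ (t+1) - 2 * real q + 1) / real l \<le> real i
              \<and> real i \<le> (2 * real q ^ (t+1) + 2 * real q - 1) / real l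
            \<longrightarrow> \<not> coset_leader q n i)"
proof -
  note oddq = assms(2) and ldq = assms(3) and l2 = assms(4) and lq = assms(5)
    and mt = assms(6) and m5 = assms(7) and nd = assms(8)
  have l0: "l > 0" using l2 by simp
  have "q \<ge> 2" using l2 lq by linarith
  moreover have "q \<noteq> 2" using oddq by auto
  ultimately have q3: "q \<ge> 3" by linarith
  have t2: "t \<ge> 2" using m5 mt by linarith
  obtain k where k: "q + 1 = l*k" using ldq by blast
  have Qr: "int q = int l * int k - 1" using k by (metis add_diff_cancel_right' of_nat_1 of_nat_add of_nat_mult)
  obtain u where Pu: "int q ^ t = int l * u + (if even t then 1 else -1)" using pow_cong[OF Qr] by blast
  note TC = T_char[OF l2 q3 Qr Pu]
  obtain u' where "int q ^ m = int l * u' + (if even m then 1 else -1)" using pow_cong[OF Qr] by blast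
  then have "int (q^m + 1) = int l * u'" using mt by simp
  then have ldN: "l dvd q^m + 1" by (metis dvdI int_dvd_int_iff)
  have ln: "l * n = q^m + 1" using nd ldN by simp
  have qm: "q^m = q*q^t*q^t" using mt pow_m' by simp
  have Pq: "q^t \<ge> q*q"
  proof -
    have "q^2 \<le> q^t" using t2 q3 by (simp add: power_increasing)
    then show ?thesis by (simp add: power2_eq_square)
  qed
  have "2 \<le> q^t" using Pq q3facts(3)[OF q3] q3 by linarith
  then have "q*q^t*2 \<le> q*q^t*q^t" by (rule mult_le_mono2)
  then have bigN: "2*q*q^t \<le> q^m" using qm by (simp add: mult_ac)
  have n2: "n \<ge> 2"
  proof (rule ccontr)
    assume "\<not> n \<ge> 2"
    then have "l*n \<le> l*1" by (intro mult_le_mono2) simp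
    moreover have "q \<le> q^m" using q3 mt by (simp add: self_le_power)
    ultimately show False using ln lq by simp
  qed
  have rel: "\<And>i j. l*(i*q^j mod n) = (l*i)*q^j mod (q^m+1)"
    by (simp only: mult_mod_right ln[symmetric] mult.assoc)
  have qM: "q^(2*m) mod n = 1"
  proof -
    have M1: "q^m \<ge> 1" using q3 by simp
    have "q^(2*m) = q^m * q^m" by (simp add: mult_2 power_add)
    then have a: "q^(2*m) mod (q^m+1) = 1" using sq_mod[OF M1] by simp
    have "n dvd q^m + 1" using ln by (metis dvd_triv_right)
    then have "q^(2*m) mod (q^m+1) mod n = q^(2*m) mod n" by (rule mod_mod_cancel)
    then show ?thesis using a n2 by simp
  qed
  have cop: "coprime q l" using coprime_divisors[of q q l "q+1"] ldq by simp
  have ndq: "\<And>i. \<not> q dvd i \<Longrightarrow> \<not> q dvd l*i" using coprime_dvd_mult_right_iff[OF cop] by simp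
  have mt': "2*t+1 = m" using mt by simp
  have badi: "\<And>i j. (l*i)*q^j mod (q^m+1) < l*i \<Longrightarrow> \<not> coset_leader q n i"
  proof -
    fix i j assume "(l*i)*q^j mod (q^m+1) < l*i"
    then have "l*(i*q^j mod n) < l*i" using rel by simp
    then have "i*q^j mod n < i" by simp
    then show "\<not> coset_leader q n i" by (rule not_leader)
  qed
  show ?thesis
  proof (intro conjI; intro allI impI)
    fix i assume h: "1 \<le> i \<and> real i < (2 * real q ^ (t+1) - 2 * real q + 1) / real l
              \<and> \<not> q dvd i \<and> int i \<notin> Tset q l t"
    have sb: "l*i + 2*q \<le> 2*q*q^t" using h rconv_lt[OF l0] nat_of_real1 by blast
    have s1: "l*i \<ge> 1" using h l0 by simp
    have nds: "\<not> q dvd l*i" using h ndq by blast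
    have nF: "\<not> Fs q (q^t) (l*i)" using h TC(2) nds by blast
    have good: "\<And>j. 0 < j \<Longrightarrow> j < 2*m \<Longrightarrow> l*i < (l*i)*q^j mod (q^m+1)"
      using good_s[OF q3 t2 s1 sb nds nF, unfolded mt'] by blast
    have iN: "i < n"
    proof -
      have "l*i < l*n" using sb bigN ln by linarith
      then show ?thesis by simp
    qed
    have strict: "\<And>j. 0 < j \<Longrightarrow> j < 2*m \<Longrightarrow> i < i*q^j mod n"
    proof -
      fix j assume "0 < j" "j < 2*m"
      then have "l*i < l*(i*q^j mod n)" using good rel by simp
      then show "i < i*q^j mod n" by simp
    qed
    show "coset_leader q n i \<and> card (cyc_coset q n i) = 2 * m"
      using leader_card[OF _ iN _ qM strict] n2 m5 by simp
  next
    fix i assume h: "int i \<in> Tset q l t \<and> \<not> q dvd i"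
    have F: "Fs q (q^t) (l*i)" using h TC(1) by blast
    have P1: "q^t \<ge> 1" using q3 by simp
    note fb = Fs_bound[OF F P1]
    obtain j where "(l*i)*q^j mod (q^(2*t+1)+1) < l*i"
      using bad_s[OF q3 t2 fb(2) fb(1) disjI1[OF F]] by blast
    then show "\<not> coset_leader q n i" unfolding mt' by (rule badi)
  next
    fix i assume h: "(2 * real q ^ (t+1) - 2 * real q + 1) / real l \<le> real i
              \<and> real i \<le> (2 * real q ^ (t+1) + 2 * real q - 1) / real l"
    have r1: "2 * real q ^ (t+1) - 2 * real q + 1 \<le> real (l*i)" using h rconv_ge[OF l0] by blast
    have r2: "real (l*i) \<le> 2 * real q ^ (t+1) + 2 * real q - 1" using h rconv_le[OF l0] by blast
    note nb = nat_of_real2[OF r1 r2]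
    have "2*q \<le> 2*q*q^t" using Pq q3 by simp
    then have s1: "l*i \<ge> 1" using nb bigN q3 by linarith
    obtain j where "(l*i)*q^j mod (q^(2*t+1)+1) < l*i"
      using bad_s[OF q3 t2 s1 nb(2) disjI2[OF nb(1)]] by blast
    then show "\<not> coset_leader q n i" unfolding mt' by (rule badi)
  qed
qed


end
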